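(* For any simple graph $G$ with at least one edge, $$\chi_f(G) \geq \xi_f(G) \geq 1 + \max\left\{\frac{n^+}{n^-}, \frac{n^-}{n^+}\right\},$$ where $n^+$ and $n^-$ are the numbers (with multiplicity) of positive and negative eigenvalues of the adjacency matrix of $G$.
   Context: Fractional chromatic number $\chi_f(G)$: the minimum of $\sum_{J} \sigma_J$ over all maps $\sigma$ from the set of independent sets of $G$ to $\mathbb{R}_{\ge 0}$ such that $\sum_{J \ni v} \sigma_J \ge 1$ for every vertex $v$. A $d/r$-representation of $G$ is a family of rank-$r$ orthogonal projectors $P_v \in \mathbb{C}^{d\times d}$, $v \in V(G)$, with $P_vP_w = O$ for every edge $vw$; the projective rank is $\xi_f(G) = \inf\{d/r : G \text{ has a } d/r\text{-representation}\}$. *)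

theory Defs
  imports "Jordan_Normal_Form.Schur_Decomposition" "Jordan_Normal_Form.DL_Rank"
    "Jordan_Normal_Form.Char_Poly"
begin

definition simple_graph :: "nat \<Rightarrow> (nat \<Rightarrow> nat \<Rightarrow> bool) \<Rightarrow> bool" where
  "simple_graph n E \<longleftrightarrow> (\<forall>i j. E i j \<longrightarrow> i < n \<and> j < n \<and> i \<noteq> j \<and> E j i)"

definition indep_sets :: "nat \<Rightarrow> (nat \<Rightarrow> nat \<Rightarrow> bool) \<Rightarrow> nat set set" where
  "indep_sets n E = {J. J \<subseteq> {0..<n} \<and> (\<forall>u\<in>J. \<forall>w\<in>J. \<not> E u w)}"

definition frac_chromatic :: "nat \<Rightarrow> (nat \<Rightarrow> nat \<Rightarrow> bool) \<Rightarrow> real" where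
  "frac_chromatic n E = Inf {(\<Sum>J\<in>indep_sets n E. \<sigma> J) | \<sigma>.
      (\<forall>J\<in>indep_sets n E. \<sigma> J \<ge> 0) \<and>
      (\<forall>v<n. (\<Sum>J\<in>{J\<in>indep_sets n E. v \<in> J}. \<sigma> J) \<ge> 1)}"

definition orth_projector :: "nat \<Rightarrow> complex mat \<Rightarrow> bool" where
  "orth_projector d P \<longleftrightarrow> P \<in> carrier_mat d d \<and> mat_adjoint P = P \<and> P * P = P"

definition dr_representation :: "nat \<Rightarrow> (nat \<Rightarrow> nat \<Rightarrow> bool) \<Rightarrow> nat \<Rightarrow> nat \<Rightarrow> (nat \<Rightarrow> complex mat) \<Rightarrow> bool" where
  "dr_representation n E d r P \<longleftrightarrow>
     (\<forall>v<n. orth_projector d (P v) \<and> vec_space.rank d (P v) = r) \<and>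
     (\<forall>v w. v < n \<longrightarrow> w < n \<longrightarrow> E v w \<longrightarrow> P v * P w = 0\<^sub>m d d)"

definition projective_rank :: "nat \<Rightarrow> (nat \<Rightarrow> nat \<Rightarrow> bool) \<Rightarrow> real" where
  "projective_rank n E = Inf {real d / real r | d r. r > 0 \<and> (\<exists>P. dr_representation n E d r P)}"

definition adjacency_matrix :: "nat \<Rightarrow> (nat \<Rightarrow> nat \<Rightarrow> bool) \<Rightarrow> real mat" where
  "adjacency_matrix n E = mat n n (\<lambda>(i, j). if E i j then 1 else 0)"

definition n_pos_eig :: "real mat \<Rightarrow> nat" where
  "n_pos_eig A = (\<Sum>x\<in>{x. x > 0 \<and> poly (char_poly A) x = 0}. order x (char_poly A))"

definition n_neg_eig :: "real mat \<Rightarrow> nat" where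
  "n_neg_eig A = (\<Sum>x\<in>{x. x < 0 \<and> poly (char_poly A) x = 0}. order x (char_poly A))"

end

theory Submission
  imports Defs "Jordan_Normal_Form.Jordan_Normal_Form_Uniqueness" "Jordan_Normal_Form.Jordan_Normal_Form_Existence"
begin
lemma inj_count_nat:
  fixes g :: "nat \<Rightarrow> nat \<Rightarrow> 'a::field"
  assumes H: "\<And>c. (\<forall>i<M. (\<Sum>j<N. g i j * c j) = 0) \<Longrightarrow> \<forall>j<N. c j = 0"
  shows "N \<le> M"
proof (rule ccontr)
  assume "\<not> N \<le> M"
  hence MN: "M < N" by simp
  define G where "G = mat N N (\<lambda>(i,j). if i < M then g i j else 0)"
  have G: "G \<in> carrier_mat N N" by (simp add: G_def)
  have "det G = 0"
  proof -
    have Z: "(\<Prod>i\<in>{0..<N}. G $$ (i, p i)) = 0" if p: "p permutes {0..<N}" for p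
        apply (rule prod_zero[OF _ bexI[of _ M]])
        using MN p by (auto simp: G_def permutes_in_image)
    show ?thesis unfolding det_def using G by (simp, intro sum.neutral) (auto simp: Z)
  qed
  then obtain v where v: "v \<in> carrier_vec N" "v \<noteq> 0\<^sub>v N" "G *\<^sub>v v = 0\<^sub>v N"
    using det_0_iff_vec_prod_zero_field[OF G] by auto
  have "\<forall>i<M. (\<Sum>j<N. g i j * v $ j) = 0"
  proof (intro allI impI)
    fix i assume i: "i < M"
    have "(G *\<^sub>v v) $ i = 0" using v(3) i MN by simp
    thus "(\<Sum>j<N. g i j * v $ j) = 0" using i MN v(1)
      by (simp add: G_def scalar_prod_def lessThan_atLeast0)
  qed
  from H[OF this] have "v = 0\<^sub>v N" using v(1) by (intro eq_vecI) auto
  with v(2) show False by simp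
qed

lemma inj_count:
  fixes g :: "'i \<Rightarrow> 'j \<Rightarrow> 'a::field"
  assumes I: "finite I" and J: "finite J"
  assumes H: "\<And>c. (\<forall>i\<in>I. (\<Sum>j\<in>J. g i j * c j) = 0) \<Longrightarrow> \<forall>j\<in>J. c j = 0"
  shows "card J \<le> card I"
proof -
  obtain fi where fi: "bij_betw fi {0..<card I} I" using ex_bij_betw_nat_finite[OF I] by blast
  obtain fj where fj: "bij_betw fj {0..<card J} J" using ex_bij_betw_nat_finite[OF J] by blast
  show ?thesis
  proof (rule inj_count_nat[where M="card I" and N="card J" and g="\<lambda>i j. g (fi i) (fj j)"])
    fix c :: "nat \<Rightarrow> 'a"
    assume A: "\<forall>i<card I. (\<Sum>j<card J. g (fi i) (fj j) * c j) = 0"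
    define c' where "c' = (\<lambda>y. c (inv_into {0..<card J} fj y))"
    have sumeq: "(\<Sum>j\<in>J. g x j * c' j) = (\<Sum>j<card J. g x (fj j) * c j)" for x
    proof -
      have "(\<Sum>j\<in>J. g x j * c' j) = (\<Sum>j\<in>{0..<card J}. g x (fj j) * c' (fj j))"
        using sum.reindex_bij_betw[OF fj, of "\<lambda>j. g x j * c' j"] by simp
      also have "\<dots> = (\<Sum>j<card J. g x (fj j) * c j)"
        unfolding c'_def lessThan_atLeast0
        by (rule sum.cong, simp, metis bij_betw_inv_into_left fj)
      finally show ?thesis .
    qed
    have "\<forall>i\<in>I. (\<Sum>j\<in>J. g i j * c' j) = 0"
    proof
      fix x assume "x \<in> I"
      then obtain i where "i < card I" "x = fi i" using fi unfolding bij_betw_def by (metis atLeastLessThan_iff imageE)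
      thus "(\<Sum>j\<in>J. g x j * c' j) = 0" using A sumeq by simp
    qed
    from H[OF this] have "\<forall>j\<in>J. c' j = 0" .
    thus "\<forall>j<card J. c j = 0"
      unfolding c'_def using fj
      by (metis atLeastLessThan_iff bij_betwE bij_betw_inv_into_left zero_le)
  qed
qed

definition nsq :: "nat \<Rightarrow> (nat \<Rightarrow> complex) \<Rightarrow> complex" where
  "nsq n y = (\<Sum>u<n. cnj (y u) * y u)"

lemma nsq_real: "nsq n y = of_real (\<Sum>u<n. (cmod (y u))^2)"
  unfolding nsq_def of_real_sum
proof (intro sum.cong refl)
  fix u show "cnj (y u) * y u = complex_of_real ((cmod (y u))\<^sup>2)"
    by (metis complex_norm_square mult.commute)
qed

lemma nsq_zero: assumes "nsq n y = 0" shows "\<forall>u<n. y u = 0"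
proof -
  have "(\<Sum>u<n. (cmod (y u))^2) = 0" using assms nsq_real[of n y] of_real_eq_0_iff by metis
  hence "\<forall>u\<in>{..<n}. (cmod (y u))^2 = 0" by (subst (asm) sum_nonneg_eq_0_iff) auto
  thus ?thesis by auto
qed

lemma quad_real:
  fixes a :: "nat \<Rightarrow> nat \<Rightarrow> real"
  assumes sym: "\<forall>u<n. \<forall>w<n. a u w = a w u"
  shows "cnj (\<Sum>u<n. \<Sum>w<n. of_real (a u w) * cnj (y u) * y w) = (\<Sum>u<n. \<Sum>w<n. of_real (a u w) * cnj (y u) * y w)"
proof -
  have "cnj (\<Sum>u<n. \<Sum>w<n. of_real (a u w) * cnj (y u) * y w) = (\<Sum>u<n. \<Sum>w<n. of_real (a u w) * y u * cnj (y w))"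
    by (simp add: cnj_sum)
  also have "\<dots> = (\<Sum>w<n. \<Sum>u<n. of_real (a u w) * y u * cnj (y w))" by (rule sum.swap)
  also have "\<dots> = (\<Sum>w<n. \<Sum>u<n. of_real (a w u) * cnj (y w) * y u)"
    using sym by (intro sum.cong refl) (simp add: mult.commute mult.left_commute)
  finally show ?thesis .
qed

lemma herm_real:
  fixes a :: "nat \<Rightarrow> nat \<Rightarrow> real"
  assumes sym: "\<forall>u<n. \<forall>w<n. a u w = a w u"
    and eig: "\<forall>u<n. (\<Sum>w<n. of_real (a u w) * y w) = c * y u"
    and nz: "\<exists>u<n. y u \<noteq> 0"
  shows "Im c = 0"
proof -
  define R where "R = (\<Sum>u<n. \<Sum>w<n. of_real (a u w) * cnj (y u) * y w)"
  have "c * nsq n y = (\<Sum>u<n. cnj (y u) * (c * y u))"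
    unfolding nsq_def by (simp add: sum_distrib_left mult.commute mult.left_commute)
  also have "\<dots> = (\<Sum>u<n. cnj (y u) * (\<Sum>w<n. of_real (a u w) * y w))"
    using eig by simp
  also have "\<dots> = R" unfolding R_def by (simp add: sum_distrib_left mult.commute mult.left_commute)
  finally have cR: "c * nsq n y = R" .
  have "cnj R = R" unfolding R_def by (rule quad_real[OF sym])
  hence "Im R = 0" by (metis Im_complex_of_real Reals_cnj_iff Reals_cases)
  moreover obtain s where s: "nsq n y = of_real s" using nsq_real by blast
  moreover have "s \<noteq> 0" using nsq_zero[of n y] nz s by auto
  ultimately have "Im c * s = 0" using cR by (metis times_complex.sel(2) Im_complex_of_real Re_complex_of_real mult_zero_right add_0 mult.commute)
  thus ?thesis using \<open>s \<noteq> 0\<close> by simp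
qed

lemma kd_eq: "mat_kernel A = mat_kernel B \<Longrightarrow> dim_col A = dim_col B \<Longrightarrow> kernel_dim A = kernel_dim B"
  unfolding kernel_dim_def by simp

lemma ker2_fun:
  fixes a :: "nat \<Rightarrow> nat \<Rightarrow> real" and c :: complex
  assumes sym: "\<forall>u<n. \<forall>w<n. a u w = a w u"
    and y: "\<forall>u<n. y u = (\<Sum>w<n. (of_real (a u w) - (if u = w then c else 0)) * v w)"
    and By: "\<forall>u<n. (\<Sum>w<n. (of_real (a u w) - (if u = w then c else 0)) * y w) = 0"
  shows "\<forall>u<n. y u = 0"
proof (rule ccontr)
  assume "\<not> (\<forall>u<n. y u = 0)"
  hence nz: "\<exists>u<n. y u \<noteq> 0" by auto
  have dl: "(\<Sum>w<n. (of_real (a u w) - (if u = w then c else 0)) * f w) = (\<Sum>w<n. of_real (a u w) * f w) - c * f u"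
    if "u < n" for u f
    using that by (simp add: left_diff_distrib sum_subtractf if_distrib[of "\<lambda>x. x * f _"] sum.delta cong: if_cong)
  have eig: "\<forall>u<n. (\<Sum>w<n. of_real (a u w) * y w) = c * y u"
    using By dl by auto
  have "Im c = 0" by (rule herm_real[OF sym eig nz])
  hence cc: "cnj c = c" by (simp add: complex_eq_iff)
  have "nsq n y = (\<Sum>u<n. cnj (y u) * (\<Sum>w<n. (of_real (a u w) - (if u = w then c else 0)) * v w))"
    unfolding nsq_def using y by simp
  also have "\<dots> = (\<Sum>u<n. \<Sum>w<n. v w * ((of_real (a u w) - (if u = w then c else 0)) * cnj (y u)))"
    by (simp add: sum_distrib_left mult.commute mult.left_commute)
  also have "\<dots> = (\<Sum>w<n. \<Sum>u<n. v w * ((of_real (a u w) - (if u = w then c else 0)) * cnj (y u)))"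
    by (rule sum.swap)
  also have "\<dots> = (\<Sum>w<n. v w * cnj (\<Sum>u<n. (of_real (a w u) - (if w = u then c else 0)) * y u))"
    by (intro sum.cong refl) (auto simp: sum_distrib_left cnj_sum cc sym intro!: sum.cong)
  also have "\<dots> = 0" using By by simp
  finally have "nsq n y = 0" .
  from nsq_zero[OF this] nz show False by auto
qed

lemma order_of_real:
  fixes p :: "real poly"
  assumes p: "p \<noteq> 0"
  shows "order (of_real x) (map_poly of_real p :: complex poly) = order x p"
proof -
  interpret mp: map_poly_comm_ring_hom "of_real :: real \<Rightarrow> complex" ..
  obtain q where q: "p = [:- x, 1:] ^ order x p * q" "\<not> [:- x, 1:] dvd q"
    using order_decomp[OF p] by blast
  have pq: "poly q x \<noteq> 0" using q(2) poly_eq_0_iff_dvd by blast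
  have q0: "q \<noteq> 0" using pq by auto
  have mp: "(map_poly of_real p :: complex poly) = [:- of_real x, 1:] ^ order x p * map_poly of_real q"
    by (subst q(1)) (simp add: mp.hom_mult mp.hom_power)
  have mq0: "(map_poly of_real q :: complex poly) \<noteq> 0" using q0 by simp
  have "poly (map_poly of_real q :: complex poly) (of_real x) \<noteq> 0"
    using pq by (simp add: of_real_hom.poly_map_poly)
  hence o0: "order (of_real x) (map_poly of_real q :: complex poly) = 0" by (rule order_0I)
  show ?thesis unfolding mp
    by (subst order_mult) (use mq0 in \<open>auto simp: order_power_n_n o0\<close>)
qed

lemma sum_list_eq_mono:
  fixes f g :: "'a \<Rightarrow> nat"
  assumes "\<forall>x\<in>set xs. f x \<le> g x" "sum_list (map f xs) = sum_list (map g xs)"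
  shows "\<forall>x\<in>set xs. f x = g x"
  using assms
proof (induction xs)
  case (Cons y ys)
  have "sum_list (map f ys) \<le> sum_list (map g ys)"
    using Cons.prems(1) by (intro sum_list_mono) auto
  with Cons.prems have "f y = g y" by auto
  with Cons show ?case by auto
qed simp

lemma jm_diag: "jordan_matrix (map (\<lambda>a. (1::nat, a)) es) =
   mat (length es) (length es) (\<lambda>(i,j). if i = j then es ! i else (0::'a::{zero,one}))"
proof (induction es)
  case Nil
  show ?case by (auto simp: jordan_matrix_def diag_block_mat.simps intro!: eq_matI)
next
  case (Cons a es)
  have sl: "sum_list (map fst (map (\<lambda>a. (1::nat, a)) es)) = length es"
    by (induction es) auto
  show ?case
    unfolding list.map jordan_matrix_Cons Cons sl
    by (rule eq_matI) (auto simp: nth_Cons' jordan_block_index)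
qed

lemma char_mat_index:
  assumes "A \<in> carrier_mat n n" "u < n" "w < n"
  shows "char_matrix (map_mat complex_of_real A) c $$ (u,w) = of_real (A $$ (u,w)) - (if u = w then c else 0)"
  using assms by (simp add: char_matrix_def)

lemma ker2_mat:
  fixes A :: "real mat"
  assumes A: "A \<in> carrier_mat n n" and sym: "\<forall>i<n. \<forall>j<n. A $$ (i,j) = A $$ (j,i)"
  shows "mat_kernel (char_matrix (map_mat complex_of_real A) c ^\<^sub>m 2) = mat_kernel (char_matrix (map_mat complex_of_real A) c ^\<^sub>m 1)"
proof -
  define B where "B = char_matrix (map_mat complex_of_real A) c"
  have B: "B \<in> carrier_mat n n" unfolding B_def using A by simp
  have p1: "B ^\<^sub>m 1 = B" using B by simp
  have p2: "B ^\<^sub>m 2 = B * B" using B by (simp add: numeral_2_eq_2)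
  have Bi: "B $$ (u,w) = of_real (A $$ (u,w)) - (if u = w then c else 0)" if "u<n" "w<n" for u w
    unfolding B_def using char_mat_index[OF A that] .
  have mv: "(B *\<^sub>v v) $ u = (\<Sum>w<n. (of_real (A $$ (u,w)) - (if u = w then c else 0)) * v $ w)"
    if "u < n" "v \<in> carrier_vec n" for u v
    using that B by (simp add: scalar_prod_def Bi lessThan_atLeast0 mult.commute)
  have "v \<in> mat_kernel (B * B) \<longleftrightarrow> v \<in> mat_kernel B" for v
  proof
    assume "v \<in> mat_kernel (B * B)"
    hence v: "v \<in> carrier_vec n" and BBv: "(B * B) *\<^sub>v v = 0\<^sub>v n" using B by (auto simp: mat_kernel_def)
    define y where "y = B *\<^sub>v v"
    have y: "y \<in> carrier_vec n" using B v y_def by simp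
    have By: "B *\<^sub>v y = 0\<^sub>v n" using BBv B v unfolding y_def by (simp add: assoc_mult_mat_vec)
    have "\<forall>u<n. y $ u = 0"
    proof (rule ker2_fun[of n "\<lambda>u w. A $$ (u,w)" "\<lambda>u. y $ u" c "\<lambda>w. v $ w"])
      show "\<forall>u<n. \<forall>w<n. A $$ (u, w) = A $$ (w, u)" using sym by auto
      show "\<forall>u<n. y $ u = (\<Sum>w<n. (of_real (A $$ (u, w)) - (if u = w then c else 0)) * v $ w)"
        using mv v unfolding y_def by auto
      show "\<forall>u<n. (\<Sum>w<n. (of_real (A $$ (u, w)) - (if u = w then c else 0)) * y $ w) = 0"
        using mv[OF _ y] By by (metis index_zero_vec(1))
    qed
    hence "B *\<^sub>v v = 0\<^sub>v n" unfolding y_def[symmetric] using y by (intro eq_vecI) auto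
    thus "v \<in> mat_kernel B" using v B by (auto simp: mat_kernel_def)
  next
    assume "v \<in> mat_kernel B"
    hence v: "v \<in> carrier_vec n" and Bv: "B *\<^sub>v v = 0\<^sub>v n" using B by (auto simp: mat_kernel_def)
    have "(B * B) *\<^sub>v v = B *\<^sub>v (B *\<^sub>v v)" using B v by (simp add: assoc_mult_mat_vec)
    also have "\<dots> = 0\<^sub>v n" using Bv B by (intro eq_vecI) (auto simp: row_def)
    finally show "v \<in> mat_kernel (B * B)" using v B by (auto simp: mat_kernel_def)
  qed
  thus ?thesis unfolding B_def[symmetric] p1 p2 by auto
qed

lemma spectral:
  fixes A :: "real mat"
  assumes A: "A \<in> carrier_mat n n" and sym: "\<forall>i<n. \<forall>j<n. A $$ (i,j) = A $$ (j,i)"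
  shows "\<exists>(P::complex mat) Q (dd::nat \<Rightarrow> real). P \<in> carrier_mat n n \<and> Q \<in> carrier_mat n n \<and> P * Q = 1\<^sub>m n \<and> Q * P = 1\<^sub>m n \<and>
   (\<forall>i<n. \<forall>u<n. (\<Sum>w<n. of_real (A $$ (u,w)) * P $$ (w,i)) = of_real (dd i) * P $$ (u,i)) \<and>
   (\<forall>x. order x (char_poly A) = card {i. i < n \<and> dd i = x})"
proof -
  define Ac where "Ac = map_mat complex_of_real A"
  have Ac: "Ac \<in> carrier_mat n n" unfolding Ac_def using A by simp
  obtain as where "char_poly Ac = (\<Prod>a\<leftarrow>as. [:- a, 1:])" using char_poly_factorized[OF Ac] by blast
  then obtain n_as where jnf: "jordan_nf Ac n_as" using jordan_nf_exists[OF Ac] by blast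
  have dge: "dim_gen_eigenspace Ac ev 2 = dim_gen_eigenspace Ac ev 1" for ev
    unfolding dim_gen_eigenspace_def Ac_def
    by (rule kd_eq[OF ker2_mat[OF A sym]]) (use A in simp)
  have sizes: "\<forall>na\<in>set n_as. fst na = 1"
  proof
    fix na assume na: "na \<in> set n_as"
    obtain k a where na': "na = (k,a)" by force
    let ?xs = "map fst [(n, e)\<leftarrow>n_as . e = a]"
    have "sum_list (map (min 1) ?xs) = sum_list (map (min 2) ?xs)"
      using dge[of a] unfolding dim_gen_eigenspace[OF jnf] by simp
    hence "\<forall>x\<in>set ?xs. min 1 x = min 2 x" by (intro sum_list_eq_mono) auto
    moreover have "k \<in> set ?xs" using na na' by force
    ultimately have "k \<le> 1" by (metis min_def numeral_le_one_iff semiring_norm(69) nle_le)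
    moreover have "k \<noteq> 0" using jnf na na' unfolding jordan_nf_def by force
    ultimately show "fst na = 1" using na' by simp
  qed
  define es where "es = map snd n_as"
  have nas: "n_as = map (\<lambda>a. (1::nat, a)) es"
    unfolding es_def using sizes by (induction n_as) auto
  have sim: "similar_mat Ac (jordan_matrix n_as)" using jnf unfolding jordan_nf_def by simp
  then obtain P Q where wit: "similar_mat_wit Ac (jordan_matrix n_as) P Q" unfolding similar_mat_def by blast
  define D where "D = jordan_matrix n_as"
  have Dd: "D = mat (length es) (length es) (\<lambda>(i,j). if i = j then es ! i else 0)"
    unfolding D_def nas jm_diag by simp
  from wit Ac have PQ: "P \<in> carrier_mat n n" "Q \<in> carrier_mat n n" "D \<in> carrier_mat n n"
     "P * Q = 1\<^sub>m n" "Q * P = 1\<^sub>m n" "Ac = P * D * Q"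
    unfolding similar_mat_wit_def D_def Let_def by auto
  have len: "length es = n" using PQ(3) Dd by auto
  have APD: "Ac * P = P * D"
  proof -
    have "Ac * P = P * D * Q * P" using PQ by simp
    also have "\<dots> = P * D * (Q * P)" using PQ by (simp add: assoc_mult_mat[of _ n n _ n _ n])
    also have "\<dots> = P * D" using PQ by simp
    finally show ?thesis .
  qed
  have eig: "(\<Sum>w<n. of_real (A $$ (u,w)) * P $$ (w,i)) = es ! i * P $$ (u,i)" if "i < n" "u < n" for i u
  proof -
    have "(Ac * P) $$ (u,i) = (\<Sum>w<n. of_real (A $$ (u,w)) * P $$ (w,i))"
      using that PQ(1) A unfolding Ac_def by (simp add: scalar_prod_def lessThan_atLeast0)
    moreover have "(P * D) $$ (u,i) = (\<Sum>k<n. P $$ (u,k) * D $$ (k,i))"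
      using that PQ(1,3) by (simp add: scalar_prod_def lessThan_atLeast0)
    moreover have "(\<Sum>k<n. P $$ (u,k) * D $$ (k,i)) = es ! i * P $$ (u,i)"
      using that len by (simp add: Dd if_distrib[of "\<lambda>x. _ * x"] sum.delta' cong: if_cong)
    ultimately show ?thesis using APD by simp
  qed
  have real: "Im (es ! i) = 0" if i: "i < n" for i
  proof (rule herm_real[of n "\<lambda>u w. A $$ (u,w)" "\<lambda>u. P $$ (u,i)"])
    show "\<forall>u<n. \<forall>w<n. A $$ (u, w) = A $$ (w, u)" using sym by auto
    show "\<forall>u<n. (\<Sum>w<n. complex_of_real (A $$ (u, w)) * P $$ (w, i)) = es ! i * P $$ (u, i)"
      using eig i by auto
    have "(Q * P) $$ (i,i) = (\<Sum>u<n. Q $$ (i,u) * P $$ (u,i))" using PQ(1,2) i by (simp add: scalar_prod_def lessThan_atLeast0)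
    hence "(\<Sum>u<n. Q $$ (i,u) * P $$ (u,i)) = 1" using PQ(5) i by simp
    thus "\<exists>u<n. P $$ (u, i) \<noteq> 0" by (metis (no_types, lifting) mult_zero_right sum.neutral zero_neq_one lessThan_iff)
  qed
  define dd where "dd i = Re (es ! i)" for i
  have esd: "es ! i = of_real (dd i)" if "i < n" for i
    using real[OF that] unfolding dd_def by (simp add: complex_eq_iff)
  have cpA: "char_poly A \<noteq> 0" using degree_monic_char_poly[OF A] by auto
  have cpAc: "char_poly Ac = map_poly of_real (char_poly A)"
    unfolding Ac_def by (rule of_real_hom.char_poly_hom[OF A])
  have ord: "order x (char_poly A) = card {i. i < n \<and> dd i = x}" for x
  proof -
    have "order x (char_poly A) = order (of_real x) (char_poly Ac)"
      unfolding cpAc using order_of_real[OF cpA] by simp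
    also have "\<dots> = sum_list (map fst (filter (\<lambda>na. snd na = of_real x) n_as))"
      by (rule jordan_nf_order[OF jnf])
    also have "\<dots> = length (filter (\<lambda>e. e = of_real x) es)"
      unfolding nas by (induction es) auto
    also have "\<dots> = card {i. i < length es \<and> es ! i = of_real x}"
      by (rule length_filter_conv_card)
    also have "{i. i < length es \<and> es ! i = of_real x} = {i. i < n \<and> dd i = x}"
      using esd len by auto
    finally show ?thesis .
  qed
  show ?thesis
    apply (rule exI[of _ P], rule exI[of _ Q], rule exI[of _ dd])
    using PQ eig esd ord by auto
qed

lemma count_eig:
  fixes p :: "real poly" and dd :: "nat \<Rightarrow> real"
  assumes ord: "\<forall>x. order x p = card {i. i < n \<and> dd i = x}" and p: "p \<noteq> 0"
  shows "(\<Sum>x\<in>{x. Q x \<and> poly p x = 0}. order x p) = card {i. i < n \<and> Q (dd i)}"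
proof -
  let ?R = "{x. Q x \<and> poly p x = 0}"
  have fin: "finite ?R" using poly_roots_finite[OF p] by (rule rev_finite_subset) auto
  have "(\<Sum>x\<in>?R. order x p) = (\<Sum>x\<in>?R. card {i. i < n \<and> dd i = x})" using ord by simp
  also have "\<dots> = card (\<Union>x\<in>?R. {i. i < n \<and> dd i = x})"
    by (rule card_UN_disjoint[symmetric]) (use fin in auto)
  also have "(\<Union>x\<in>?R. {i. i < n \<and> dd i = x}) = {i. i < n \<and> Q (dd i)}"
  proof (rule equalityI)
    show "{i. i < n \<and> Q (dd i)} \<subseteq> (\<Union>x\<in>?R. {i. i < n \<and> dd i = x})"
    proof
    fix i assume "i \<in> {i. i < n \<and> Q (dd i)}"
    hence i: "i < n" "Q (dd i)" by auto
    have "card {j. j < n \<and> dd j = dd i} \<noteq> 0" using i by (subst card_0_eq) auto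
    hence "order (dd i) p \<noteq> 0" using ord by simp
    hence "poly p (dd i) = 0" using order_root by blast
    thus "i \<in> (\<Union>x\<in>?R. {i. i < n \<and> dd i = x})" using i by auto
    qed
  qed auto
  finally show ?thesis .
qed

lemma npos_nneg:
  fixes A :: "real mat" and dd :: "nat \<Rightarrow> real"
  assumes A: "A \<in> carrier_mat n n" and ord: "\<forall>x. order x (char_poly A) = card {i. i < n \<and> dd i = x}"
  shows "n_pos_eig A = card {i. i < n \<and> dd i > 0}" "n_neg_eig A = card {i. i < n \<and> dd i < 0}"
proof -
  have cp: "char_poly A \<noteq> 0" using degree_monic_char_poly[OF A] by auto
  show "n_pos_eig A = card {i. i < n \<and> dd i > 0}"
    unfolding n_pos_eig_def using count_eig[OF ord cp, of "\<lambda>x. x > 0"] by simp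
  show "n_neg_eig A = card {i. i < n \<and> dd i < 0}"
    unfolding n_neg_eig_def using count_eig[OF ord cp, of "\<lambda>x. x < 0"] by simp
qed

lemma bilin:
  fixes p :: "nat \<Rightarrow> nat \<Rightarrow> complex"
  shows "(\<Sum>u<n. cnj (\<Sum>j<n. \<alpha> j * p j u) * (\<Sum>i<n. \<beta> i * p i u)) =
         (\<Sum>i<n. \<Sum>j<n. cnj (\<alpha> j) * \<beta> i * (\<Sum>u<n. cnj (p j u) * p i u))"
proof -
  have "(\<Sum>u<n. cnj (\<Sum>j<n. \<alpha> j * p j u) * (\<Sum>i<n. \<beta> i * p i u)) =
        (\<Sum>u<n. \<Sum>j<n. \<Sum>i<n. cnj (\<alpha> j) * \<beta> i * (cnj (p j u) * p i u))"
    by (simp add: cnj_sum sum_distrib_left sum_distrib_right mult.commute mult.left_commute)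
  also have "\<dots> = (\<Sum>u<n. \<Sum>i<n. \<Sum>j<n. cnj (\<alpha> j) * \<beta> i * (cnj (p j u) * p i u))"
    by (intro sum.cong refl sum.swap)
  also have "\<dots> = (\<Sum>i<n. \<Sum>u<n. \<Sum>j<n. cnj (\<alpha> j) * \<beta> i * (cnj (p j u) * p i u))"
    by (rule sum.swap)
  also have "\<dots> = (\<Sum>i<n. \<Sum>j<n. \<Sum>u<n. cnj (\<alpha> j) * \<beta> i * (cnj (p j u) * p i u))"
    by (intro sum.cong refl sum.swap)
  also have "\<dots> = (\<Sum>i<n. \<Sum>j<n. cnj (\<alpha> j) * \<beta> i * (\<Sum>u<n. cnj (p j u) * p i u))"
    by (simp add: sum_distrib_left)
  finally show ?thesis .
qed

lemma orth:
  fixes a :: "nat \<Rightarrow> nat \<Rightarrow> real" and p :: "nat \<Rightarrow> nat \<Rightarrow> complex" and dd :: "nat \<Rightarrow> real"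
  assumes sym: "\<forall>u<n. \<forall>w<n. a u w = a w u"
  and eig: "\<forall>i<n. \<forall>u<n. (\<Sum>w<n. of_real (a u w) * p i w) = of_real (dd i) * p i u"
  and ij: "i < n" "j < n" "dd i \<noteq> dd j"
  shows "(\<Sum>u<n. cnj (p j u) * p i u) = 0"
proof -
  let ?G = "(\<Sum>u<n. cnj (p j u) * p i u)"
  have "of_real (dd i) * ?G = (\<Sum>u<n. cnj (p j u) * (of_real (dd i) * p i u))"
    by (simp add: sum_distrib_left mult.commute mult.left_commute)
  also have "\<dots> = (\<Sum>u<n. cnj (p j u) * (\<Sum>w<n. of_real (a u w) * p i w))"
    using eig ij by simp
  also have "\<dots> = (\<Sum>u<n. \<Sum>w<n. p i w * (of_real (a u w) * cnj (p j u)))"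
    by (simp add: sum_distrib_left mult.commute mult.left_commute)
  also have "\<dots> = (\<Sum>w<n. \<Sum>u<n. p i w * (of_real (a u w) * cnj (p j u)))"
    by (rule sum.swap)
  also have "\<dots> = (\<Sum>w<n. p i w * cnj (\<Sum>u<n. of_real (a w u) * p j u))"
    using sym by (auto simp: sum_distrib_left cnj_sum intro!: sum.cong)
  also have "\<dots> = (\<Sum>w<n. p i w * cnj (of_real (dd j) * p j w))"
    using eig ij by simp
  also have "\<dots> = of_real (dd j) * ?G"
    by (simp add: sum_distrib_left mult.commute mult.left_commute)
  finally have "(of_real (dd i) - of_real (dd j)) * ?G = 0" by (simp add: algebra_simps)
  thus ?thesis using ij(3) by simp
qed


lemma key_col:
  fixes a :: "nat \<Rightarrow> nat \<Rightarrow> real" and p q :: "nat \<Rightarrow> nat \<Rightarrow> complex" and dd :: "nat \<Rightarrow> real"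
    and x :: "nat \<Rightarrow> complex"
  assumes sym: "\<forall>u<n. \<forall>w<n. a u w = a w u"
  and QP: "\<forall>i<n. \<forall>j<n. (\<Sum>u<n. q i u * p j u) = (if i = j then 1 else 0)"
  and PQ: "\<forall>u<n. \<forall>w<n. (\<Sum>i<n. p i u * q i w) = (if u = w then 1 else 0)"
  and eig: "\<forall>i<n. \<forall>u<n. (\<Sum>w<n. of_real (a u w) * p i w) = of_real (dd i) * p i u"
  and neg: "\<forall>i<n. dd i < 0 \<longrightarrow> (\<Sum>u<n. q i u * x u) = 0"
  shows "\<exists>z. (\<Sum>u<n. \<Sum>w<n. of_real (a u w) * (cnj (x u) * x w)) = nsq n z \<and>
             (nsq n z = 0 \<longrightarrow> (\<forall>u<n. (\<Sum>w<n. of_real (a u w) * x w) = 0))"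
proof -
  define c where "c i = (\<Sum>u<n. q i u * x u)" for i
  have xrep: "x u = (\<Sum>i<n. c i * p i u)" if u: "u < n" for u
  proof -
    have "(\<Sum>i<n. c i * p i u) = (\<Sum>i<n. \<Sum>w<n. x w * (p i u * q i w))"
      unfolding c_def by (simp add: sum_distrib_left sum_distrib_right mult.commute mult.left_commute)
    also have "\<dots> = (\<Sum>w<n. \<Sum>i<n. x w * (p i u * q i w))" by (rule sum.swap)
    also have "\<dots> = (\<Sum>w<n. x w * (if u = w then 1 else 0))"
      using PQ u by (simp add: sum_distrib_left[symmetric])
    also have "\<dots> = x u" using u by (simp add: if_distrib[of "\<lambda>t. _ * t"] sum.delta cong: if_cong)
    finally show ?thesis by simp
  qed
  have cneg: "c i = 0" if "i < n" "dd i < 0" for i using neg that unfolding c_def by simp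
  have Ax: "(\<Sum>w<n. of_real (a u w) * x w) = (\<Sum>i<n. (c i * of_real (dd i)) * p i u)" if u: "u < n" for u
  proof -
    have "(\<Sum>w<n. of_real (a u w) * x w) = (\<Sum>w<n. \<Sum>i<n. c i * (of_real (a u w) * p i w))"
      using xrep by (simp add: sum_distrib_left mult.commute mult.left_commute)
    also have "\<dots> = (\<Sum>i<n. \<Sum>w<n. c i * (of_real (a u w) * p i w))" by (rule sum.swap)
    also have "\<dots> = (\<Sum>i<n. c i * (of_real (dd i) * p i u))"
      using eig u by (simp add: sum_distrib_left[symmetric])
    finally show ?thesis by (simp add: mult.assoc)
  qed
  define G where "G j i = (\<Sum>u<n. cnj (p j u) * p i u)" for j i
  define w' where "w' i = (if dd i > 0 then c i * of_real (sqrt (dd i)) else 0)" for i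
  define z where "z u = (\<Sum>i<n. w' i * p i u)" for u
  have f1: "(\<Sum>u<n. \<Sum>w<n. of_real (a u w) * (cnj (x u) * x w)) = (\<Sum>u<n. cnj (x u) * (\<Sum>w<n. of_real (a u w) * x w))"
    by (simp add: sum_distrib_left mult.commute mult.left_commute)
  also have "\<dots> = (\<Sum>u<n. cnj (\<Sum>j<n. c j * p j u) * (\<Sum>i<n. (c i * of_real (dd i)) * p i u))"
    using xrep Ax by simp
  also have "\<dots> = (\<Sum>i<n. \<Sum>j<n. cnj (c j) * (c i * of_real (dd i)) * G j i)"
    unfolding G_def by (rule bilin)
  also have "\<dots> = (\<Sum>i<n. \<Sum>j<n. cnj (w' j) * w' i * G j i)"
  proof (intro sum.cong refl)
    fix i j assume i: "i \<in> {..<n}" and j: "j \<in> {..<n}"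
    show "cnj (c j) * (c i * of_real (dd i)) * G j i = cnj (w' j) * w' i * G j i"
    proof (cases "G j i = 0")
      case False
      hence dij: "dd i = dd j" using orth[OF sym eig, of i j] i j unfolding G_def by auto
      show ?thesis
      proof (cases "dd i > 0")
        case True
        have "of_real (dd i) = (of_real (sqrt (dd i)) * of_real (sqrt (dd j)) :: complex)"
          using True dij by (simp flip: of_real_mult)
        thus ?thesis unfolding w'_def using True dij by simp
      next
        case False
        thus ?thesis
        proof (cases "dd i = 0")
          case False
          with \<open>\<not> dd i > 0\<close> have "dd i < 0" by simp
          thus ?thesis using cneg i unfolding w'_def by simp
        qed (simp add: w'_def)
      qed
    qed simp
  qed
  also have "\<dots> = nsq n z"
    unfolding nsq_def z_def G_def by (rule bilin[symmetric])
  finally have F: "(\<Sum>u<n. \<Sum>w<n. of_real (a u w) * (cnj (x u) * x w)) = nsq n z" .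
  have "\<forall>u<n. (\<Sum>w<n. of_real (a u w) * x w) = 0" if z0: "nsq n z = 0"
  proof -
    have zz: "\<forall>u<n. z u = 0" using nsq_zero[OF z0] .
    have w0: "w' k = 0" if k: "k < n" for k
    proof -
      have "w' k = (\<Sum>i<n. w' i * (if k = i then 1 else 0))"
        using k by (simp add: if_distrib[of "\<lambda>t. _ * t"] sum.delta cong: if_cong)
      also have "\<dots> = (\<Sum>i<n. \<Sum>u<n. w' i * (q k u * p i u))"
        using QP k by (simp add: sum_distrib_left[symmetric])
      also have "\<dots> = (\<Sum>u<n. \<Sum>i<n. w' i * (q k u * p i u))" by (rule sum.swap)
      also have "\<dots> = (\<Sum>u<n. q k u * z u)"
        unfolding z_def by (simp add: sum_distrib_left mult.commute mult.left_commute)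
      also have "\<dots> = 0" using zz by simp
      finally show ?thesis .
    qed
    have cz: "c i * of_real (dd i) = 0" if "i < n" for i
    proof (cases "dd i > 0")
      case True
      hence "c i * of_real (sqrt (dd i)) = 0" using w0[OF that] unfolding w'_def by simp
      thus ?thesis using True by simp
    next
      case False
      thus ?thesis using cneg[OF that] by (cases "dd i = 0") auto
    qed
    show ?thesis using Ax cz by simp
  qed
  thus ?thesis using F by blast
qed


lemma key:
  fixes a :: "nat \<Rightarrow> nat \<Rightarrow> real" and p q :: "nat \<Rightarrow> nat \<Rightarrow> complex" and dd :: "nat \<Rightarrow> real"
    and x :: "nat \<Rightarrow> nat \<Rightarrow> complex"
  assumes sym: "\<forall>u<n. \<forall>w<n. a u w = a w u"
  and QP: "\<forall>i<n. \<forall>j<n. (\<Sum>u<n. q i u * p j u) = (if i = j then 1 else 0)"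
  and PQ: "\<forall>u<n. \<forall>w<n. (\<Sum>i<n. p i u * q i w) = (if u = w then 1 else 0)"
  and eig: "\<forall>i<n. \<forall>u<n. (\<Sum>w<n. of_real (a u w) * p i w) = of_real (dd i) * p i u"
  and Sn: "S \<subseteq> {..<n}"
  and Sind: "\<forall>y. (\<forall>u<n. (\<Sum>s\<in>S. of_real (a u s) * y s) = 0) \<longrightarrow> (\<forall>s\<in>S. y s = (0::complex))"
  and iso: "(\<Sum>u<n. \<Sum>w<n. of_real (a u w) * (\<Sum>l<d. cnj (x u l) * x w l)) = 0"
  and neg: "\<forall>i<n. dd i < 0 \<longrightarrow> (\<forall>l<d. (\<Sum>u<n. q i u * x u l) = 0)"
  and supp: "\<forall>u<n. u \<notin> S \<longrightarrow> (\<forall>l<d. x u l = 0)"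
  shows "\<forall>u<n. \<forall>l<d. x u l = 0"
proof -
  define F where "F l = (\<Sum>u<n. \<Sum>w<n. of_real (a u w) * (cnj (x u l) * x w l))" for l
  have col: "\<exists>z. F l = nsq n z \<and> (nsq n z = 0 \<longrightarrow> (\<forall>u<n. (\<Sum>w<n. of_real (a u w) * x w l) = 0))"
    if "l < d" for l
    unfolding F_def by (rule key_col[OF sym QP PQ eig]) (use neg that in auto)
  have Freal: "Im (F l) = 0 \<and> Re (F l) \<ge> 0" if l: "l < d" for l
  proof -
    obtain z where "F l = nsq n z" using col[OF l] by blast
    thus ?thesis by (simp add: nsq_real sum_nonneg)
  qed
  have "(\<Sum>l<d. F l) = 0"
  proof -
    have "(\<Sum>l<d. F l) = (\<Sum>l<d. \<Sum>u<n. \<Sum>w<n. of_real (a u w) * (cnj (x u l) * x w l))"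
      unfolding F_def ..
    also have "\<dots> = (\<Sum>u<n. \<Sum>l<d. \<Sum>w<n. of_real (a u w) * (cnj (x u l) * x w l))"
      by (rule sum.swap)
    also have "\<dots> = (\<Sum>u<n. \<Sum>w<n. \<Sum>l<d. of_real (a u w) * (cnj (x u l) * x w l))"
      by (intro sum.cong refl sum.swap)
    also have "\<dots> = 0" using iso by (simp add: sum_distrib_left)
    finally show ?thesis .
  qed
  hence "(\<Sum>l<d. Re (F l)) = 0" by (metis Re_sum zero_complex.simps(1))
  hence "\<forall>l\<in>{..<d}. Re (F l) = 0" using Freal by (subst (asm) sum_nonneg_eq_0_iff) auto
  hence F0: "F l = 0" if "l < d" for l using Freal[OF that] that by (simp add: complex_eq_iff)
  have Ax0: "\<forall>u<n. (\<Sum>w<n. of_real (a u w) * x w l) = 0" if l: "l < d" for l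
    using col[OF l] F0[OF l] by auto
  show ?thesis
  proof (intro allI impI)
    fix u l assume u: "u < n" and l: "l < d"
    have "\<forall>s\<in>S. x s l = 0"
    proof (rule Sind[THEN spec, of "\<lambda>s. x s l", THEN mp], intro allI impI)
      fix v assume v: "v < n"
      have "(\<Sum>s\<in>S. of_real (a v s) * x s l) = (\<Sum>w<n. of_real (a v w) * x w l)"
        by (rule sum.mono_neutral_left) (use Sn supp l in auto)
      thus "(\<Sum>s\<in>S. of_real (a v s) * x s l) = 0" using Ax0[OF l] v by simp
    qed
    thus "x u l = 0" using supp u l by auto
  qed
qed

definition colind :: "nat \<Rightarrow> (nat \<Rightarrow> nat \<Rightarrow> real) \<Rightarrow> nat set \<Rightarrow> bool" where
  "colind n a T \<longleftrightarrow> (\<forall>y. (\<forall>u<n. (\<Sum>s\<in>T. of_real (a u s) * y s) = 0) \<longrightarrow> (\<forall>s\<in>T. y s = (0::complex)))"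

lemma colind_select:
  fixes a :: "nat \<Rightarrow> nat \<Rightarrow> real" and p q :: "nat \<Rightarrow> nat \<Rightarrow> complex" and dd :: "nat \<Rightarrow> real"
  assumes QP: "\<forall>i<n. \<forall>j<n. (\<Sum>u<n. q i u * p j u) = (if i = j then 1 else 0)"
  and eig: "\<forall>i<n. \<forall>u<n. (\<Sum>w<n. of_real (a u w) * p i w) = of_real (dd i) * p i u"
  shows "\<exists>S. S \<subseteq> {..<n} \<and> colind n a S \<and> card {i. i < n \<and> dd i \<noteq> 0} \<le> card S"
proof -
  let ?F = "\<lambda>T. T \<subseteq> {..<n} \<and> colind n a T"
  have F0: "?F {}" by (simp add: colind_def)
  have Fb: "\<forall>T. ?F T \<longrightarrow> card T < Suc n"
  proof (intro allI impI)
    fix T assume "?F T"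
    hence "card T \<le> card {..<n}" by (intro card_mono) auto
    thus "card T < Suc n" by simp
  qed
  obtain S where S: "?F S" and Smax: "\<And>T. ?F T \<Longrightarrow> card T \<le> card S"
    using ex_has_greatest_nat[of ?F "{}" card "Suc n", OF F0 Fb] by blast
  have finS: "finite S" by (rule finite_subset[OF conjunct1[OF S]]) simp
  have span: "\<exists>co::nat \<Rightarrow> complex. \<forall>v<n. of_real (a v u) = (\<Sum>s\<in>S. co s * of_real (a v s))" if u: "u < n" for u
  proof (cases "u \<in> S")
    case True
    show ?thesis
      by (rule exI[of _ "\<lambda>s. if s = u then 1 else 0"]) (use True finS in \<open>simp add: if_distrib[of "\<lambda>t. t * _"] sum.delta cong: if_cong\<close>)
  next
    case False
    have cS: "colind n a S" using S by simp
    have "\<not> ?F (insert u S)"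
    proof
      assume "?F (insert u S)"
      from Smax[OF this] False finS show False by simp
    qed
    hence "\<not> colind n a (insert u S)" using S u by simp
    hence "\<exists>y. (\<forall>v<n. (\<Sum>s\<in>insert u S. of_real (a v s) * y s) = 0) \<and> \<not> (\<forall>s\<in>insert u S. y s = (0::complex))"
      unfolding colind_def by simp
    then obtain y :: "nat \<Rightarrow> complex" where y: "\<forall>v<n. (\<Sum>s\<in>insert u S. of_real (a v s) * y s) = 0" and ny: "\<not> (\<forall>s\<in>insert u S. y s = 0)"
      by (elim exE conjE)
    have yv: "of_real (a v u) * y u + (\<Sum>s\<in>S. of_real (a v s) * y s) = 0" if "v < n" for v
      using y that False finS by simp
    have yu: "y u \<noteq> 0"
    proof
      assume yu0: "y u = 0"
      hence "\<forall>v<n. (\<Sum>s\<in>S. of_real (a v s) * y s) = 0" using yv by simp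
      moreover have "(\<forall>v<n. (\<Sum>s\<in>S. of_real (a v s) * y s) = 0) \<longrightarrow> (\<forall>s\<in>S. y s = 0)"
        using cS unfolding colind_def by (rule spec)
      ultimately have "\<forall>s\<in>S. y s = 0" by (rule rev_mp)
      with ny yu0 show False by auto
    qed
    show ?thesis
    proof (rule exI[of _ "\<lambda>s. - y s / y u"], intro allI impI)
      fix v assume v: "v < n"
      have "(\<Sum>s\<in>S. - y s / y u * of_real (a v s)) = - (\<Sum>s\<in>S. of_real (a v s) * y s) / y u"
        by (simp add: sum_divide_distrib sum_negf mult.commute)
      also have "\<dots> = of_real (a v u)"
      proof -
        have "of_real (a v u) * y u = - (\<Sum>s\<in>S. of_real (a v s) * y s)"
          using yv[OF v] by (simp add: eq_neg_iff_add_eq_0)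
        hence "of_real (a v u) = - (\<Sum>s\<in>S. of_real (a v s) * y s) / y u"
          using yu by (metis nonzero_mult_div_cancel_right)
        thus ?thesis by simp
      qed
      finally show "of_real (a v u) = (\<Sum>s\<in>S. - y s / y u * of_real (a v s))" by simp
    qed
  qed
  have "\<forall>u. \<exists>co::nat \<Rightarrow> complex. u < n \<longrightarrow> (\<forall>v<n. of_real (a v u) = (\<Sum>s\<in>S. co s * of_real (a v s)))"
  proof
    fix u show "\<exists>co::nat \<Rightarrow> complex. u < n \<longrightarrow> (\<forall>v<n. of_real (a v u) = (\<Sum>s\<in>S. co s * of_real (a v s)))"
    proof (cases "u < n")
      case True
      from span[OF True] obtain co :: "nat \<Rightarrow> complex" where "\<forall>v<n. of_real (a v u) = (\<Sum>s\<in>S. co s * of_real (a v s))" by (elim exE)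
      thus ?thesis by (intro exI[of _ co] impI)
    qed simp
  qed
  from choice[OF this] obtain co :: "nat \<Rightarrow> nat \<Rightarrow> complex" where co0: "\<forall>u. u < n \<longrightarrow> (\<forall>v<n. of_real (a v u) = (\<Sum>s\<in>S. co u s * of_real (a v s)))"
    by (elim exE)
  have co: "\<And>u v. u < n \<Longrightarrow> v < n \<Longrightarrow> of_real (a v u) = (\<Sum>s\<in>S. co u s * of_real (a v s))"
    using co0 by simp
  define Z where "Z = {i. i < n \<and> dd i \<noteq> 0}"
  define R where "R i s = (\<Sum>u<n. p i u * co u s) / of_real (dd i)" for i s
  have prep: "p i v = (\<Sum>s\<in>S. of_real (a v s) * R i s)" if i: "i \<in> Z" and v: "v < n" for i v
  proof -
    have ddi: "(of_real (dd i) :: complex) \<noteq> 0" using i unfolding Z_def by simp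
    have "of_real (dd i) * p i v = (\<Sum>u<n. of_real (a v u) * p i u)" using eig i v unfolding Z_def by simp
    also have "\<dots> = (\<Sum>u<n. \<Sum>s\<in>S. p i u * co u s * of_real (a v s))"
      using co v by (simp add: sum_distrib_left sum_distrib_right mult.commute mult.left_commute)
    also have "\<dots> = (\<Sum>s\<in>S. \<Sum>u<n. p i u * co u s * of_real (a v s))" by (rule sum.swap)
    also have "\<dots> = (\<Sum>s\<in>S. of_real (a v s) * (\<Sum>u<n. p i u * co u s))"
      unfolding sum_distrib_left by (intro sum.cong refl) (simp add: ac_simps)
    also have "\<dots> = (\<Sum>s\<in>S. of_real (dd i) * (of_real (a v s) * R i s))"
      unfolding R_def using ddi by (intro sum.cong refl) simp
    also have "\<dots> = of_real (dd i) * (\<Sum>s\<in>S. of_real (a v s) * R i s)"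
      by (simp add: sum_distrib_left)
    finally show ?thesis using ddi by simp
  qed
  have "card Z \<le> card S"
  proof (rule inj_count[of S Z "\<lambda>s i. R i s"])
    show "finite S" by fact
    show "finite Z" unfolding Z_def by simp
    fix c assume hc: "\<forall>s\<in>S. (\<Sum>i\<in>Z. R i s * c i) = 0"
    have yv: "(\<Sum>i\<in>Z. c i * p i v) = 0" if v: "v < n" for v
    proof -
      have "(\<Sum>i\<in>Z. c i * p i v) = (\<Sum>i\<in>Z. \<Sum>s\<in>S. of_real (a v s) * (R i s * c i))"
        using prep v by (simp add: sum_distrib_left sum_distrib_right mult.commute mult.left_commute)
      also have "\<dots> = (\<Sum>s\<in>S. \<Sum>i\<in>Z. of_real (a v s) * (R i s * c i))" by (rule sum.swap)
      also have "\<dots> = 0" using hc by (simp add: sum_distrib_left[symmetric])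
      finally show ?thesis .
    qed
    show "\<forall>i\<in>Z. c i = 0"
    proof
      fix k assume k: "k \<in> Z"
      hence kn: "k < n" unfolding Z_def by simp
      have "c k = (\<Sum>i\<in>Z. c i * (if k = i then 1 else 0))"
        using k by (simp add: if_distrib[of "\<lambda>t. _ * t"] sum.delta Z_def cong: if_cong)
      also have "\<dots> = (\<Sum>i\<in>Z. \<Sum>v<n. c i * (q k v * p i v))"
        using QP kn by (auto simp: sum_distrib_left[symmetric] Z_def intro!: sum.cong)
      also have "\<dots> = (\<Sum>v<n. \<Sum>i\<in>Z. c i * (q k v * p i v))" by (rule sum.swap)
      also have "\<dots> = (\<Sum>v<n. q k v * (\<Sum>i\<in>Z. c i * p i v))"
        by (simp add: sum_distrib_left mult.commute mult.left_commute)
      also have "\<dots> = 0" using yv by simp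
      finally show "c k = 0" .
    qed
  qed
  thus ?thesis using S unfolding Z_def by blast
qed

lemma rank_basis:
  fixes Pm :: "complex mat"
  assumes Pm: "Pm \<in> carrier_mat d d" and idem: "Pm * Pm = Pm" and rk: "vec_space.rank d Pm = r"
  shows "\<exists>b. (\<forall>k<r. b k \<in> carrier_vec d \<and> Pm *\<^sub>v b k = b k) \<and>
             (\<forall>c. (\<forall>l<d. (\<Sum>k<r. c k * b k $ l) = 0) \<longrightarrow> (\<forall>k<r. c k = 0))"
proof -
  interpret vec_space "TYPE(complex)" d .
  have e: "lin_indpt {}" unfolding lin_dep_def by auto
  obtain S where S: "finite S" "maximal S (\<lambda>T. T \<subseteq> set (cols Pm) \<and> lin_indpt T)"
    using maximal_exists_superset[of "set (cols Pm)" "\<lambda>T. T \<subseteq> set (cols Pm) \<and> lin_indpt T" "{}"] e by auto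
  have cS: "card S = r" using rank_card_indpt[OF Pm S(2)] rk by simp
  have Ssub: "S \<subseteq> set (cols Pm)" and Sli: "lin_indpt S" using S(2) unfolding maximal_def by auto
  have Scar: "S \<subseteq> carrier_vec d" using Ssub Pm by (auto simp: cols_def)
  obtain h where h: "bij_betw h {0..<r} S" using ex_bij_betw_nat_finite[OF S(1)] cS by blast
  have pfix: "Pm *\<^sub>v x = x" if "x \<in> S" for x
  proof -
    from that Ssub obtain j where j: "j < d" "x = col Pm j" using Pm by (auto simp: cols_def)
    have "Pm *\<^sub>v col Pm j = col (Pm * Pm) j" using col_mult2[OF Pm Pm j(1)] by simp
    thus ?thesis using idem j by simp
  qed
  show ?thesis
  proof (rule exI[of _ h], intro conjI allI impI)
    fix k assume "k < r"
    hence hk: "h k \<in> S" using h by (auto simp: bij_betw_def)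
    show "h k \<in> carrier_vec d" using hk Scar by auto
    show "Pm *\<^sub>v h k = h k" using pfix hk by simp
  next
    fix c k assume hc: "\<forall>l<d. (\<Sum>k<r. c k * h k $ l) = 0" and k: "k < r"
    show "c k = 0"
    proof (rule ccontr)
      assume ck: "c k \<noteq> 0"
      define a where "a x = c (inv_into {0..<r} h x)" for x
      have lc: "lincomb a S = 0\<^sub>v d"
      proof (rule eq_vecI)
        have "lincomb a S \<in> carrier_vec d" using Scar by (intro lincomb_closed) auto
        thus "dim_vec (lincomb a S) = dim_vec (0\<^sub>v d)" by simp
        fix l assume "l < dim_vec (0\<^sub>v d)"
        hence l: "l < d" by simp
        have "lincomb a S $ l = (\<Sum>x\<in>S. a x * x $ l)" by (rule lincomb_index[OF l Scar])
        also have "\<dots> = (\<Sum>j\<in>{0..<r}. a (h j) * h j $ l)"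
          by (rule sum.reindex_bij_betw[OF h, symmetric])
        also have "\<dots> = (\<Sum>j<r. c j * h j $ l)"
          unfolding a_def lessThan_atLeast0 using h
          by (intro sum.cong refl) (simp add: bij_betw_inv_into_left)
        also have "\<dots> = 0" using hc l by simp
        finally show "lincomb a S $ l = 0\<^sub>v d $ l" using l by simp
      qed
      have hkS: "h k \<in> S" using h k by (auto simp: bij_betw_def)
      have ahk: "a (h k) \<noteq> 0" unfolding a_def using h k ck
          by (simp add: bij_betw_inv_into_left)
      have "lin_dep S"
        unfolding lin_dep_def using S(1) lc hkS ahk
        by (intro exI[of _ S] exI[of _ a] exI[of _ "h k"]) auto
      with Sli show False by simp
    qed
  qed
qed

definition dproj :: "nat \<Rightarrow> nat set \<Rightarrow> complex mat" where
  "dproj d C = mat d d (\<lambda>(i,j). if i = j \<and> i \<in> C then 1 else 0)"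

lemma col_dproj: "j < d \<Longrightarrow> col (dproj d C) j = (if j \<in> C then unit_vec d j else 0\<^sub>v d)"
  unfolding dproj_def by (intro eq_vecI) (auto simp: unit_vec_def)

lemma rank_dproj:
  assumes C: "C \<subseteq> {..<d}"
  shows "vec_space.rank d (dproj d C) = card C"
proof -
  interpret vec_space "TYPE(complex)" d .
  let ?D = "dproj d C"
  have D: "?D \<in> carrier_mat d d" unfolding dproj_def by simp
  have cols: "set (cols ?D) = (\<lambda>j. if j \<in> C then unit_vec d j else 0\<^sub>v d) ` {..<d}"
    using D by (auto simp: cols_def col_dproj)
  have U: "unit_vec d ` C \<subseteq> set (cols ?D)" unfolding cols using C by force
  have li_all: "lin_indpt (set (unit_vecs d))" using unit_vecs_basis unfolding basis_def by simp
  have li: "lin_indpt (unit_vec d ` C)"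
    by (rule subset_li_is_li[OF li_all]) (use C in \<open>auto simp: unit_vecs_def\<close>)
  have inj: "inj_on (unit_vec d :: nat \<Rightarrow> complex vec) C"
    using C by (auto simp: inj_on_def unit_vec_eq)
  have ge: "rank ?D \<ge> card C"
    using rank_ge_card_indpt[OF D U li] card_image[OF inj] by simp
  have e: "lin_indpt {}" unfolding lin_dep_def by auto
  obtain S where S: "finite S" "maximal S (\<lambda>T. T \<subseteq> set (cols ?D) \<and> lin_indpt T)"
    using maximal_exists_superset[of "set (cols ?D)" "\<lambda>T. T \<subseteq> set (cols ?D) \<and> lin_indpt T" "{}"] e by auto
  have rS: "rank ?D = card S" using rank_card_indpt[OF D S(2)] .
  have Ssub: "S \<subseteq> set (cols ?D)" and Sli: "lin_indpt S" using S(2) unfolding maximal_def by auto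
  have Scar: "S \<subseteq> carrier_vec d" using Ssub D by (auto simp: cols_def)
  have "0\<^sub>v d \<notin> S"
  proof -
    have "carrier class_ring \<noteq> {\<zero>\<^bsub>class_ring :: complex ring\<^esub>}"
    proof
      assume "carrier class_ring = {\<zero>\<^bsub>class_ring :: complex ring\<^esub>}"
      hence "(UNIV :: complex set) = {0}" by (simp add: class_ring_simps)
      hence "(1::complex) \<in> {0}" by blast
      thus False by simp
    qed
    thus ?thesis using zero_nin_lin_indpt[OF Scar Sli] by simp
  qed
  hence "S \<subseteq> unit_vec d ` C"
  proof (intro subsetI)
    fix x assume z: "0\<^sub>v d \<notin> S" and x: "x \<in> S"
    from x Ssub have "x \<in> (\<lambda>j. if j \<in> C then unit_vec d j else 0\<^sub>v d) ` {..<d}" unfolding cols by blast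
    then obtain j where j: "x = (if j \<in> C then unit_vec d j else 0\<^sub>v d)" by (elim imageE)
    show "x \<in> unit_vec d ` C"
    proof (cases "j \<in> C")
      case True thus ?thesis using j by simp
    next
      case False thus ?thesis using j z x by simp
    qed
  qed
  moreover have finC: "finite C" using finite_subset[OF C] by simp
  ultimately have "card S \<le> card (unit_vec d ` C :: complex vec set)" by (intro card_mono finite_imageI) auto
  also have "\<dots> \<le> card C" by (rule card_image_le[OF finC])
  finally show ?thesis using ge rS by simp
qed

lemma adj_index: "A \<in> carrier_mat d d \<Longrightarrow> i < d \<Longrightarrow> j < d \<Longrightarrow> mat_adjoint A $$ (i,j) = cnj (A $$ (j,i) :: complex)"
  by (simp add: mat_adjoint_def mat_of_rows_def)

lemma proj_orth:
  fixes Pu Pw :: "complex mat" and xu xw :: "nat \<Rightarrow> complex"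
  assumes Pu: "orth_projector d Pu" and Pw: "orth_projector d Pw" and PP: "Pu * Pw = 0\<^sub>m d d"
    and fu: "\<forall>l<d. (\<Sum>t<d. Pu $$ (l,t) * xu t) = xu l"
    and fw: "\<forall>l<d. (\<Sum>t<d. Pw $$ (l,t) * xw t) = xw l"
  shows "(\<Sum>l<d. cnj (xu l) * xw l) = 0"
proof -
  have Puc: "Pu \<in> carrier_mat d d" and Pua: "mat_adjoint Pu = Pu" using Pu unfolding orth_projector_def by auto
  have Pwc: "Pw \<in> carrier_mat d d" using Pw unfolding orth_projector_def by auto
  have herm: "cnj (Pu $$ (l,t)) = Pu $$ (t,l)" if "l < d" "t < d" for l t
    using adj_index[OF Puc that(2,1)] Pua by simp
  have zero: "(\<Sum>l<d. Pu $$ (t,l) * Pw $$ (l,t')) = 0" if "t < d" "t' < d" for t t'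
  proof -
    have "(Pu * Pw) $$ (t,t') = (\<Sum>l<d. Pu $$ (t,l) * Pw $$ (l,t'))"
      using that Puc Pwc by (simp add: scalar_prod_def lessThan_atLeast0)
    thus ?thesis using PP that by simp
  qed
  have "(\<Sum>l<d. cnj (xu l) * xw l) = (\<Sum>l<d. cnj (\<Sum>t<d. Pu $$ (l,t) * xu t) * (\<Sum>t'<d. Pw $$ (l,t') * xw t'))"
    using fu fw by simp
  also have "\<dots> = (\<Sum>l<d. \<Sum>t<d. \<Sum>t'<d. cnj (xu t) * xw t' * (Pu $$ (t,l) * Pw $$ (l,t')))"
    by (auto simp: cnj_sum sum_distrib_left sum_distrib_right herm ac_simps intro!: sum.cong)
  also have "\<dots> = (\<Sum>t<d. \<Sum>l<d. \<Sum>t'<d. cnj (xu t) * xw t' * (Pu $$ (t,l) * Pw $$ (l,t')))"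
    by (rule sum.swap)
  also have "\<dots> = (\<Sum>t<d. \<Sum>t'<d. \<Sum>l<d. cnj (xu t) * xw t' * (Pu $$ (t,l) * Pw $$ (l,t')))"
    by (intro sum.cong refl sum.swap)
  also have "\<dots> = (\<Sum>t<d. \<Sum>t'<d. cnj (xu t) * xw t' * (\<Sum>l<d. Pu $$ (t,l) * Pw $$ (l,t')))"
    by (simp add: sum_distrib_left)
  also have "\<dots> = 0" using zero by simp
  finally show ?thesis .
qed


lemma rep_bound:
  fixes E :: "nat \<Rightarrow> nat \<Rightarrow> bool" and Pr :: "nat \<Rightarrow> complex mat"
    and a :: "nat \<Rightarrow> nat \<Rightarrow> real" and p q :: "nat \<Rightarrow> nat \<Rightarrow> complex" and dd :: "nat \<Rightarrow> real"
  assumes rep: "dr_representation n E d r Pr"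
  and aE: "\<forall>u<n. \<forall>w<n. a u w \<noteq> 0 \<longrightarrow> E u w"
  and sym: "\<forall>u<n. \<forall>w<n. a u w = a w u"
  and QP: "\<forall>i<n. \<forall>j<n. (\<Sum>u<n. q i u * p j u) = (if i = j then 1 else 0)"
  and PQ: "\<forall>u<n. \<forall>w<n. (\<Sum>i<n. p i u * q i w) = (if u = w then 1 else 0)"
  and eig: "\<forall>i<n. \<forall>u<n. (\<Sum>w<n. of_real (a u w) * p i w) = of_real (dd i) * p i u"
  shows "card {i. i < n \<and> dd i \<noteq> 0} * r \<le> card {i. i < n \<and> dd i < 0} * d"
proof -
  obtain S where Sn: "S \<subseteq> {..<n}" and Sind: "colind n a S" and cS: "card {i. i < n \<and> dd i \<noteq> 0} \<le> card S"
    using colind_select[OF QP eig] by blast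
  have finS: "finite S" using finite_subset[OF Sn] by simp
  have Pv: "orth_projector d (Pr v)" "vec_space.rank d (Pr v) = r" if "v < n" for v
    using rep that unfolding dr_representation_def by auto
  have PvE: "Pr v * Pr w = 0\<^sub>m d d" if "v < n" "w < n" "E v w" for v w
    using rep that unfolding dr_representation_def by auto
  have "\<forall>v. \<exists>b::nat \<Rightarrow> complex vec. v < n \<longrightarrow> ((\<forall>k<r. b k \<in> carrier_vec d \<and> Pr v *\<^sub>v b k = b k) \<and>
             (\<forall>c. (\<forall>l<d. (\<Sum>k<r. c k * b k $ l) = 0) \<longrightarrow> (\<forall>k<r. c k = 0)))"
  proof
    fix v show "\<exists>b::nat \<Rightarrow> complex vec. v < n \<longrightarrow> ((\<forall>k<r. b k \<in> carrier_vec d \<and> Pr v *\<^sub>v b k = b k) \<and>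
             (\<forall>c. (\<forall>l<d. (\<Sum>k<r. c k * b k $ l) = 0) \<longrightarrow> (\<forall>k<r. c k = 0)))"
    proof (cases "v < n")
      case True
      have "Pr v \<in> carrier_mat d d" "Pr v * Pr v = Pr v" using Pv(1)[OF True] unfolding orth_projector_def by auto
      from rank_basis[OF this Pv(2)[OF True]] obtain b :: "nat \<Rightarrow> complex vec" where
        "(\<forall>k<r. b k \<in> carrier_vec d \<and> Pr v *\<^sub>v b k = b k) \<and>
             (\<forall>c. (\<forall>l<d. (\<Sum>k<r. c k * b k $ l) = 0) \<longrightarrow> (\<forall>k<r. c k = 0))" by (elim exE)
      thus ?thesis by (intro exI[of _ b] impI)
    qed simp
  qed
  from choice[OF this] obtain b :: "nat \<Rightarrow> nat \<Rightarrow> complex vec" where b0: "\<forall>v. v < n \<longrightarrow> ((\<forall>k<r. b v k \<in> carrier_vec d \<and> Pr v *\<^sub>v b v k = b v k) \<and>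
             (\<forall>c. (\<forall>l<d. (\<Sum>k<r. c k * b v k $ l) = 0) \<longrightarrow> (\<forall>k<r. c k = 0)))" by (elim exE)
  have bc: "b v k \<in> carrier_vec d" and bfix: "Pr v *\<^sub>v b v k = b v k" if "v < n" "k < r" for v k
    using b0 that by auto
  have bind: "\<forall>k<r. c k = 0" if "v < n" "\<forall>l<d. (\<Sum>k<r. c k * b v k $ l) = 0" for v c
    using b0 that by blast
  have Pcar: "Pr v \<in> carrier_mat d d" if "v < n" for v using Pv(1)[OF that] unfolding orth_projector_def by auto
  have bfixf: "(\<Sum>t<d. Pr v $$ (l,t) * b v k $ t) = b v k $ l" if "v < n" "k < r" "l < d" for v k l
  proof -
    have "(Pr v *\<^sub>v b v k) $ l = (\<Sum>t<d. Pr v $$ (l,t) * b v k $ t)"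
      using that Pcar[OF that(1)] bc[OF that(1,2)] by (simp add: scalar_prod_def lessThan_atLeast0)
    thus ?thesis using bfix[OF that(1,2)] by simp
  qed
  define Neg where "Neg = {i. i < n \<and> dd i < 0}"
  have "card (S \<times> {..<r}) \<le> card (Neg \<times> {..<d})"
  proof (rule inj_count[of "Neg \<times> {..<d}" "S \<times> {..<r}" "\<lambda>(i,l) (s,k). q i s * b s k $ l"])
    show "finite (Neg \<times> {..<d})" unfolding Neg_def by simp
    show "finite (S \<times> {..<r})" using finS by simp
    fix c :: "nat \<times> nat \<Rightarrow> complex"
    assume hc: "\<forall>il\<in>Neg \<times> {..<d}. (\<Sum>sk\<in>S \<times> {..<r}. (case il of (i,l) \<Rightarrow> \<lambda>(s,k). q i s * b s k $ l) sk * c sk) = 0"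
    define x where "x u l = (if u \<in> S then (\<Sum>k<r. c (u,k) * b u k $ l) else 0)" for u l
    have xfix: "\<forall>l<d. (\<Sum>t<d. Pr u $$ (l,t) * x u t) = x u l" if u: "u < n" for u
    proof (intro allI impI)
      fix l assume l: "l < d"
      show "(\<Sum>t<d. Pr u $$ (l,t) * x u t) = x u l"
      proof (cases "u \<in> S")
        case True
        have "(\<Sum>t<d. Pr u $$ (l,t) * x u t) = (\<Sum>t<d. \<Sum>k<r. c (u,k) * (Pr u $$ (l,t) * b u k $ t))"
          unfolding x_def using True by (simp add: sum_distrib_left ac_simps)
        also have "\<dots> = (\<Sum>k<r. \<Sum>t<d. c (u,k) * (Pr u $$ (l,t) * b u k $ t))" by (rule sum.swap)
        also have "\<dots> = (\<Sum>k<r. c (u,k) * b u k $ l)"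
          using bfixf[OF u _ l] by (simp add: sum_distrib_left[symmetric])
        finally show ?thesis unfolding x_def using True by simp
      qed (simp add: x_def)
    qed
    have "\<forall>u<n. \<forall>l<d. x u l = 0"
    proof (rule key[of n a q p dd S x d])
      show "\<forall>u<n. \<forall>w<n. a u w = a w u" by fact
      show "\<forall>i<n. \<forall>j<n. (\<Sum>u<n. q i u * p j u) = (if i = j then 1 else 0)" by fact
      show "\<forall>u<n. \<forall>w<n. (\<Sum>i<n. p i u * q i w) = (if u = w then 1 else 0)" by fact
      show "\<forall>i<n. \<forall>u<n. (\<Sum>w<n. complex_of_real (a u w) * p i w) = complex_of_real (dd i) * p i u" by fact
      show "S \<subseteq> {..<n}" by fact
      show "\<forall>y. (\<forall>u<n. (\<Sum>s\<in>S. complex_of_real (a u s) * y s) = 0) \<longrightarrow> (\<forall>s\<in>S. y s = 0)"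
        using Sind unfolding colind_def .
      show "\<forall>u<n. u \<notin> S \<longrightarrow> (\<forall>l<d. x u l = 0)" by (simp add: x_def)
      show "(\<Sum>u<n. \<Sum>w<n. complex_of_real (a u w) * (\<Sum>l<d. cnj (x u l) * x w l)) = 0"
      proof (intro sum.neutral ballI)
        fix u w assume u: "u \<in> {..<n}" and w: "w \<in> {..<n}"
        show "complex_of_real (a u w) * (\<Sum>l<d. cnj (x u l) * x w l) = 0"
        proof (cases "a u w = 0")
          case False
          hence E: "E u w" using aE u w by auto
          have "(\<Sum>l<d. cnj (x u l) * x w l) = 0"
            by (rule proj_orth[OF Pv(1) Pv(1) PvE xfix xfix]) (use u w E in auto)
          thus ?thesis by simp
        qed simp
      qed
      show "\<forall>i<n. dd i < 0 \<longrightarrow> (\<forall>l<d. (\<Sum>u<n. q i u * x u l) = 0)"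
      proof (intro allI impI)
        fix i l assume i: "i < n" and di: "dd i < 0" and l: "l < d"
        have "(\<Sum>u<n. q i u * x u l) = (\<Sum>s\<in>S. q i s * x s l)"
          by (rule sum.mono_neutral_right) (use Sn in \<open>auto simp: x_def\<close>)
        also have "\<dots> = (\<Sum>s\<in>S. \<Sum>k<r. q i s * b s k $ l * c (s,k))"
          unfolding x_def by (simp add: sum_distrib_left ac_simps)
        also have "\<dots> = (\<Sum>sk\<in>S \<times> {..<r}. q i (fst sk) * b (fst sk) (snd sk) $ l * c sk)"
          by (subst sum.cartesian_product) (simp add: case_prod_beta)
        also have "\<dots> = 0" using hc i di l unfolding Neg_def by (simp add: case_prod_beta)
        finally show "(\<Sum>u<n. q i u * x u l) = 0" .
      qed
    qed
    show "\<forall>sk\<in>S \<times> {..<r}. c sk = 0"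
    proof
      fix sk assume sk: "sk \<in> S \<times> {..<r}"
      obtain s k where skd: "sk = (s,k)" by force
      have s: "s \<in> S" "s < n" and k: "k < r" using sk skd Sn by auto
      have "\<forall>l<d. (\<Sum>k<r. c (s,k) * b s k $ l) = 0"
        using \<open>\<forall>u<n. \<forall>l<d. x u l = 0\<close> s unfolding x_def by auto
      from bind[OF s(2) this] k show "c sk = 0" using skd by simp
    qed
  qed
  hence "card S * r \<le> card Neg * d" by (simp add: card_cartesian_product)
  hence "card S * r \<le> card {i. i < n \<and> dd i < 0} * d" unfolding Neg_def .
  moreover have "card {i. i < n \<and> dd i \<noteq> 0} * r \<le> card S * r" using cS by simp
  ultimately show ?thesis by linarith
qed


lemma part2:
  fixes E :: "nat \<Rightarrow> nat \<Rightarrow> bool" and Pr :: "nat \<Rightarrow> complex mat"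
  assumes G: "simple_graph n E" and rep: "dr_representation n E d r Pr"
  shows "(n_pos_eig (adjacency_matrix n E) + n_neg_eig (adjacency_matrix n E)) * r \<le> n_neg_eig (adjacency_matrix n E) * d"
    "(n_pos_eig (adjacency_matrix n E) + n_neg_eig (adjacency_matrix n E)) * r \<le> n_pos_eig (adjacency_matrix n E) * d"
proof -
  define A where "A = adjacency_matrix n E"
  have A: "A \<in> carrier_mat n n" unfolding A_def adjacency_matrix_def by simp
  have Ai: "A $$ (i,j) = (if E i j then 1 else 0)" if "i < n" "j < n" for i j
    using that unfolding A_def adjacency_matrix_def by simp
  have Esym: "E i j \<longleftrightarrow> E j i" for i j using G unfolding simple_graph_def by blast
  have sym: "\<forall>i<n. \<forall>j<n. A $$ (i,j) = A $$ (j,i)" using Ai Esym by simp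
  obtain P Q :: "complex mat" and dd :: "nat \<Rightarrow> real" where
    PQ: "P \<in> carrier_mat n n" "Q \<in> carrier_mat n n" "P * Q = 1\<^sub>m n" "Q * P = 1\<^sub>m n"
    and eig: "\<forall>i<n. \<forall>u<n. (\<Sum>w<n. of_real (A $$ (u,w)) * P $$ (w,i)) = of_real (dd i) * P $$ (u,i)"
    and ord: "\<forall>x. order x (char_poly A) = card {i. i < n \<and> dd i = x}"
    using spectral[OF A sym] by blast
  have np: "n_pos_eig A = card {i. i < n \<and> dd i > 0}" and nn: "n_neg_eig A = card {i. i < n \<and> dd i < 0}"
    using npos_nneg[OF A ord] by auto
  have QPf: "\<forall>i<n. \<forall>j<n. (\<Sum>u<n. Q $$ (i,u) * P $$ (u,j)) = (if i = j then 1 else 0)"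
  proof (intro allI impI)
    fix i j assume "i < n" "j < n"
    hence "(Q * P) $$ (i,j) = (\<Sum>u<n. Q $$ (i,u) * P $$ (u,j))" using PQ(1,2) by (simp add: scalar_prod_def lessThan_atLeast0)
    thus "(\<Sum>u<n. Q $$ (i,u) * P $$ (u,j)) = (if i = j then 1 else 0)" using PQ(4) \<open>i < n\<close> \<open>j < n\<close> by simp
  qed
  have PQf: "\<forall>u<n. \<forall>w<n. (\<Sum>i<n. P $$ (u,i) * Q $$ (i,w)) = (if u = w then 1 else 0)"
  proof (intro allI impI)
    fix u w assume "u < n" "w < n"
    hence "(P * Q) $$ (u,w) = (\<Sum>i<n. P $$ (u,i) * Q $$ (i,w))" using PQ(1,2) by (simp add: scalar_prod_def lessThan_atLeast0)
    thus "(\<Sum>i<n. P $$ (u,i) * Q $$ (i,w)) = (if u = w then 1 else 0)" using PQ(3) \<open>u < n\<close> \<open>w < n\<close> by simp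
  qed
  have Zc: "card {i. i < n \<and> dd i \<noteq> 0} = card {i. i < n \<and> dd i > 0} + card {i. i < n \<and> dd i < 0}"
  proof -
    have "{i. i < n \<and> dd i \<noteq> 0} = {i. i < n \<and> dd i > 0} \<union> {i. i < n \<and> dd i < 0}" by auto
    thus ?thesis by (simp add: card_Un_disjoint[symmetric] disjoint_iff)
  qed
  have b1: "card {i. i < n \<and> dd i \<noteq> 0} * r \<le> card {i. i < n \<and> dd i < 0} * d"
  proof (rule rep_bound[OF rep, of "\<lambda>u w. A $$ (u,w)" "\<lambda>i u. Q $$ (i,u)" "\<lambda>i u. P $$ (u,i)" dd])
    show "\<forall>u<n. \<forall>w<n. A $$ (u, w) \<noteq> 0 \<longrightarrow> E u w" using Ai by simp
  qed (use sym QPf PQf eig in auto)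
  have b2: "card {i. i < n \<and> - dd i \<noteq> 0} * r \<le> card {i. i < n \<and> - dd i < 0} * d"
  proof (rule rep_bound[OF rep, of "\<lambda>u w. - A $$ (u,w)" "\<lambda>i u. Q $$ (i,u)" "\<lambda>i u. P $$ (u,i)" "\<lambda>i. - dd i"])
    show "\<forall>u<n. \<forall>w<n. - A $$ (u, w) \<noteq> 0 \<longrightarrow> E u w" using Ai by simp
    show "\<forall>i<n. \<forall>u<n. (\<Sum>w<n. complex_of_real (- A $$ (u, w)) * P $$ (w, i)) = complex_of_real (- dd i) * P $$ (u, i)"
      using eig by (simp add: sum_negf)
  qed (use sym QPf PQf in auto)
  show "(n_pos_eig (adjacency_matrix n E) + n_neg_eig (adjacency_matrix n E)) * r \<le> n_neg_eig (adjacency_matrix n E) * d"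
    using b1 Zc np nn unfolding A_def by simp
  have "{i. i < n \<and> - dd i < 0} = {i. i < n \<and> dd i > 0}" by auto
  moreover have "{i. i < n \<and> - dd i \<noteq> 0} = {i. i < n \<and> dd i \<noteq> 0}" by auto
  ultimately show "(n_pos_eig (adjacency_matrix n E) + n_neg_eig (adjacency_matrix n E)) * r \<le> n_pos_eig (adjacency_matrix n E) * d"
    using b2 Zc np nn unfolding A_def by simp
qed

lemma dproj_mult: "dproj d C1 * dproj d C2 = mat d d (\<lambda>(i,j). if i = j \<and> i \<in> C1 \<and> i \<in> C2 then 1 else 0)"
proof (rule eq_matI)
  fix i j assume "i < dim_row (mat d d (\<lambda>(i,j). if i = j \<and> i \<in> C1 \<and> i \<in> C2 then 1 else (0::complex)))"
    "j < dim_col (mat d d (\<lambda>(i,j). if i = j \<and> i \<in> C1 \<and> i \<in> C2 then 1 else (0::complex)))"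
  hence ij: "i < d" "j < d" by auto
  have "(dproj d C1 * dproj d C2) $$ (i,j) = (\<Sum>k\<in>{0..<d}. (if i = k \<and> i \<in> C1 then 1 else 0) * (if k = j \<and> k \<in> C2 then 1 else (0::complex)))"
    using ij by (simp add: dproj_def scalar_prod_def)
  also have "\<dots> = (\<Sum>k\<in>{0..<d}. if k = i then (if i = j \<and> i \<in> C1 \<and> i \<in> C2 then 1 else 0) else 0)"
    by (intro sum.cong refl) auto
  also have "\<dots> = (if i = j \<and> i \<in> C1 \<and> i \<in> C2 then 1 else 0)" using ij by (simp add: sum.delta)
  finally show "(dproj d C1 * dproj d C2) $$ (i,j) = mat d d (\<lambda>(i,j). if i = j \<and> i \<in> C1 \<and> i \<in> C2 then 1 else 0) $$ (i,j)"
    using ij by simp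
qed (auto simp: dproj_def)

lemma dproj_orth: "orth_projector d (dproj d C)"
  unfolding orth_projector_def
proof (intro conjI)
  show D: "dproj d C \<in> carrier_mat d d" by (simp add: dproj_def)
  show "mat_adjoint (dproj d C) = dproj d C"
  proof (rule eq_matI)
    show "dim_row (mat_adjoint (dproj d C)) = dim_row (dproj d C)" by (simp add: mat_adjoint_def dproj_def)
    show "dim_col (mat_adjoint (dproj d C)) = dim_col (dproj d C)" by (simp add: mat_adjoint_def dproj_def mat_of_rows_def)
    fix i j assume "i < dim_row (dproj d C)" "j < dim_col (dproj d C)"
    hence ij: "i < d" "j < d" by (auto simp: dproj_def)
    show "mat_adjoint (dproj d C) $$ (i,j) = dproj d C $$ (i,j)"
      using adj_index[OF D ij] ij by (auto simp: dproj_def)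
  qed
  show "dproj d C * dproj d C = dproj d C" unfolding dproj_mult by (auto simp: dproj_def)
qed

lemma construct_rep:
  fixes c :: "nat \<Rightarrow> nat set"
  assumes ind: "\<forall>k<d. c k \<in> indep_sets n E"
  and cov: "\<forall>v<n. r \<le> card {k. k < d \<and> v \<in> c k}"
  shows "\<exists>Pr. dr_representation n E d r Pr"
proof -
  have "\<forall>v. \<exists>C. v < n \<longrightarrow> (C \<subseteq> {k. k < d \<and> v \<in> c k} \<and> card C = r)"
  proof
    fix v show "\<exists>C. v < n \<longrightarrow> (C \<subseteq> {k. k < d \<and> v \<in> c k} \<and> card C = r)"
    proof (cases "v < n")
      case True
      obtain C where "C \<subseteq> {k. k < d \<and> v \<in> c k}" "card C = r"
        using obtain_subset_with_card_n[OF cov[rule_format, OF True]] by blast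
      thus ?thesis by blast
    qed simp
  qed
  from choice[OF this] obtain C :: "nat \<Rightarrow> nat set" where C: "\<forall>v. v < n \<longrightarrow> (C v \<subseteq> {k. k < d \<and> v \<in> c k} \<and> card (C v) = r)"
    by (elim exE)
  show ?thesis
  proof (rule exI[of _ "\<lambda>v. dproj d (C v)"], unfold dr_representation_def, intro conjI allI impI)
    fix v assume v: "v < n"
    show "orth_projector d (dproj d (C v))" by (rule dproj_orth)
    have "C v \<subseteq> {..<d}" using C v by auto
    thus "vec_space.rank d (dproj d (C v)) = r" using rank_dproj C v by simp
  next
    fix v w assume v: "v < n" and w: "w < n" and E: "E v w"
    have disj: "k \<notin> C v \<or> k \<notin> C w" for k
    proof (rule ccontr)
      assume "\<not> (k \<notin> C v \<or> k \<notin> C w)"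
      hence "k < d" "v \<in> c k" "w \<in> c k" using C v w by auto
      thus False using ind E unfolding indep_sets_def by blast
    qed
    show "dproj d (C v) * dproj d (C w) = 0\<^sub>m d d"
      unfolding dproj_mult using disj by (intro eq_matI) auto
  qed
qed

lemma len_filter_rep:
  "length (filter P (concat (map (\<lambda>J. replicate (a J) J) Js))) = sum_list (map (\<lambda>J. if P J then a J else 0) Js)"
  by (induction Js) auto

lemma finite_indep: "finite (indep_sets n E)"
proof -
  have "indep_sets n E \<subseteq> Pow {0..<n}" unfolding indep_sets_def by auto
  thus ?thesis using finite_subset by blast
qed

lemma frac_to_rep:
  fixes \<sigma> :: "nat set \<Rightarrow> real" and N :: nat
  assumes nonneg: "\<forall>J\<in>indep_sets n E. \<sigma> J \<ge> 0"
    and covr: "\<forall>v<n. (\<Sum>J\<in>{J\<in>indep_sets n E. v \<in> J}. \<sigma> J) \<ge> 1"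
    and N: "N > 0"
  shows "\<exists>d. (\<exists>Pr. dr_representation n E d N Pr) \<and>
             real d \<le> real N * (\<Sum>J\<in>indep_sets n E. \<sigma> J) + real (card (indep_sets n E))"
proof -
  let ?I = "indep_sets n E"
  have finI: "finite ?I" by (rule finite_indep)
  obtain Js where Js: "set Js = ?I" "distinct Js" using finite_distinct_list[OF finI] by blast
  define a where "a J = nat \<lceil>real N * \<sigma> J\<rceil>" for J
  define L where "L = concat (map (\<lambda>J. replicate (a J) J) Js)"
  define d where "d = length L"
  have aJ: "real (a J) \<le> real N * \<sigma> J + 1" if "J \<in> ?I" for J
  proof -
    have "real N * \<sigma> J \<ge> 0" using nonneg that N by simp
    thus ?thesis unfolding a_def by linarith
  qed
  have aJ2: "real (a J) \<ge> real N * \<sigma> J" for J unfolding a_def by linarith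
  have dsum: "d = (\<Sum>J\<in>?I. a J)"
    unfolding d_def L_def using Js by (simp add: length_concat o_def sum_list_distinct_conv_sum_set)
  have "real d = (\<Sum>J\<in>?I. real (a J))" unfolding dsum by simp
  also have "\<dots> \<le> (\<Sum>J\<in>?I. real N * \<sigma> J + 1)" by (rule sum_mono) (use aJ in auto)
  also have "\<dots> = real N * (\<Sum>J\<in>?I. \<sigma> J) + real (card ?I)" by (simp add: sum.distrib sum_distrib_left)
  finally have dle: "real d \<le> real N * (\<Sum>J\<in>?I. \<sigma> J) + real (card ?I)" .
  have ind: "\<forall>k<d. L ! k \<in> ?I"
  proof (intro allI impI)
    fix k assume "k < d"
    hence "L ! k \<in> set L" unfolding d_def by simp
    thus "L ! k \<in> ?I" unfolding L_def using Js by (auto split: if_splits)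
  qed
  have cov: "\<forall>v<n. N \<le> card {k. k < d \<and> v \<in> L ! k}"
  proof (intro allI impI)
    fix v assume v: "v < n"
    have "card {k. k < d \<and> v \<in> L ! k} = length (filter (\<lambda>J. v \<in> J) L)"
      unfolding d_def by (simp add: length_filter_conv_card)
    also have "\<dots> = sum_list (map (\<lambda>J. if v \<in> J then a J else 0) Js)"
      unfolding L_def by (rule len_filter_rep)
    also have "\<dots> = (\<Sum>J\<in>?I. if v \<in> J then a J else 0)"
      using Js by (simp add: sum_list_distinct_conv_sum_set)
    also have "\<dots> = (\<Sum>J\<in>{J\<in>?I. v \<in> J}. a J)"
      using finI by (simp add: sum.inter_filter)
    finally have eq: "card {k. k < d \<and> v \<in> L ! k} = (\<Sum>J\<in>{J\<in>?I. v \<in> J}. a J)" .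
    have "real N \<le> real N * (\<Sum>J\<in>{J\<in>?I. v \<in> J}. \<sigma> J)"
      using covr v by (simp add: mult_le_cancel_left1)
    also have "\<dots> = (\<Sum>J\<in>{J\<in>?I. v \<in> J}. real N * \<sigma> J)" by (simp add: sum_distrib_left)
    also have "\<dots> \<le> (\<Sum>J\<in>{J\<in>?I. v \<in> J}. real (a J))" by (rule sum_mono) (use aJ2 in auto)
    also have "\<dots> = real (card {k. k < d \<and> v \<in> L ! k})" unfolding eq by simp
    finally show "N \<le> card {k. k < d \<and> v \<in> L ! k}" by simp
  qed
  obtain Pr where "dr_representation n E d N Pr" using construct_rep[OF ind cov] by blast
  thus ?thesis using dle by blast
qed

lemma ratio_bound:
  fixes x m r d :: real
  assumes "m > 0" "r > 0" "(x + m) * r \<le> m * d"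
  shows "1 + x / m \<le> d / r"
proof -
  have "(x + m) / m \<le> d / r" using assms by (simp add: divide_le_eq le_divide_eq field_simps)
  moreover have "(x + m) / m = 1 + x / m" using assms by (simp add: field_simps)
  ultimately show ?thesis by simp
qed

theorem corollary1p10:
  fixes n :: nat and E :: "nat \<Rightarrow> nat \<Rightarrow> bool"
  assumes "simple_graph n E" and "\<exists>i j. E i j"
  shows "frac_chromatic n E \<ge> projective_rank n E \<and>
         projective_rank n E \<ge> 1 + max (real (n_pos_eig (adjacency_matrix n E)) / real (n_neg_eig (adjacency_matrix n E)))
                                          (real (n_neg_eig (adjacency_matrix n E)) / real (n_pos_eig (adjacency_matrix n E)))"
proof -
  note G = assms(1)
  obtain i0 j0 where e0: "E i0 j0" using assms(2) by blast
  have "i0 < n" using G e0 unfolding simple_graph_def by blast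
  hence n0: "0 < n" by simp
  let ?I = "indep_sets n E"
  define R :: "real set" where "R = {real d / real r | d r. r > 0 \<and> (\<exists>P. dr_representation n E d r P)}"
  define F :: "real set" where "F = {(\<Sum>J\<in>?I. \<sigma> J) | \<sigma>. (\<forall>J\<in>?I. \<sigma> J \<ge> 0) \<and> (\<forall>v<n. (\<Sum>J\<in>{J\<in>?I. v \<in> J}. \<sigma> J) \<ge> 1)}"
  have pr: "projective_rank n E = Inf R" unfolding projective_rank_def R_def ..
  have fc: "frac_chromatic n E = Inf F" unfolding frac_chromatic_def F_def ..
  have Rb: "bdd_below R" unfolding R_def by (rule bdd_belowI[of _ 0]) auto
  have Rne: "R \<noteq> {}"
  proof -
    have "\<exists>P. dr_representation n E n 1 P"
    proof (rule construct_rep[of n "\<lambda>k. {k}"])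
      show "\<forall>k<n. {k} \<in> ?I" using G unfolding indep_sets_def simple_graph_def by auto
      show "\<forall>v<n. 1 \<le> card {k. k < n \<and> v \<in> {k}}"
      proof (intro allI impI)
        fix v assume "v < n"
        hence "{k. k < n \<and> v \<in> {k}} = {v}" by auto
        thus "1 \<le> card {k. k < n \<and> v \<in> {k}}" by simp
      qed
    qed
    hence "real n / real (1::nat) \<in> R" unfolding R_def by blast
    thus ?thesis by blast
  qed
  have Fne: "F \<noteq> {}"
  proof -
    define \<sigma> where "\<sigma> J = (if card J = 1 then 1 else (0::real))" for J :: "nat set"
    have "\<forall>v<n. (\<Sum>J\<in>{J\<in>?I. v \<in> J}. \<sigma> J) \<ge> 1"
    proof (intro allI impI)
      fix v assume v: "v < n"
      have vI: "{v} \<in> {J\<in>?I. v \<in> J}" using G v unfolding indep_sets_def simple_graph_def by auto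
      have fin: "finite {J\<in>?I. v \<in> J}" using finite_indep[of n E] by simp
      have "\<sigma> {v} \<le> (\<Sum>J\<in>{J\<in>?I. v \<in> J}. \<sigma> J)"
        by (rule member_le_sum[OF vI]) (auto simp: \<sigma>_def fin)
      thus "(\<Sum>J\<in>{J\<in>?I. v \<in> J}. \<sigma> J) \<ge> 1" by (simp add: \<sigma>_def)
    qed
    moreover have "\<forall>J\<in>?I. \<sigma> J \<ge> 0" by (simp add: \<sigma>_def)
    ultimately have "(\<Sum>J\<in>?I. \<sigma> J) \<in> F" unfolding F_def by blast
    thus ?thesis by blast
  qed
  have part1: "Inf R \<le> Inf F"
  proof (rule cInf_greatest[OF Fne])
    fix y assume "y \<in> F"
    then obtain \<sigma> where y: "y = (\<Sum>J\<in>?I. \<sigma> J)" and nonneg: "\<forall>J\<in>?I. \<sigma> J \<ge> 0"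
      and covr: "\<forall>v<n. (\<Sum>J\<in>{J\<in>?I. v \<in> J}. \<sigma> J) \<ge> 1" unfolding F_def by blast
    show "Inf R \<le> y"
    proof (rule field_le_epsilon)
      fix e :: real assume e: "0 < e"
      obtain N :: nat where N: "real (card ?I) / e < real N" using reals_Archimedean2 by blast
      have Npos: "N > 0"
      proof -
        have "real (card ?I) / e \<ge> 0" using e by simp
        thus ?thesis using N by (cases N) auto
      qed
      obtain d where drep: "\<exists>Pr. dr_representation n E d N Pr"
        and dle: "real d \<le> real N * y + real (card ?I)"
        using frac_to_rep[OF nonneg covr Npos] y by blast
      have inR: "real d / real N \<in> R" unfolding R_def using drep Npos by blast
      have "Inf R \<le> real d / real N" by (rule cInf_lower[OF inR Rb])
      also have "\<dots> \<le> (real N * y + real (card ?I)) / real N"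
        using dle Npos by (intro divide_right_mono) auto
      also have "\<dots> = y + real (card ?I) / real N"
        using Npos by (simp add: add_divide_distrib)
      also have "real (card ?I) / real N \<le> e"
        using N e Npos by (simp add: divide_le_eq field_simps)
      hence "y + real (card ?I) / real N \<le> y + e" by simp
      finally show "Inf R \<le> y + e" .
    qed
  qed
  let ?p = "n_pos_eig (adjacency_matrix n E)" and ?m = "n_neg_eig (adjacency_matrix n E)"
  have part2: "1 + max (real ?p / real ?m) (real ?m / real ?p) \<le> Inf R"
  proof (rule cInf_greatest[OF Rne])
    fix x assume "x \<in> R"
    then obtain d r Pr where x: "x = real d / real r" and r: "r > 0" and rep: "dr_representation n E d r Pr"
      unfolding R_def by blast
    have b1: "(?p + ?m) * r \<le> ?m * d" and b2: "(?p + ?m) * r \<le> ?p * d" using part2[OF G rep] by auto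
    have rd: "r \<le> d"
    proof -
      have "Pr 0 \<in> carrier_mat d d" "vec_space.rank d (Pr 0) = r"
        using rep n0 unfolding dr_representation_def orth_projector_def by auto
      thus ?thesis using vec_space.rank_le_nc by metis
    qed
    have x1: "1 \<le> x" using rd r unfolding x by simp
    show "1 + max (real ?p / real ?m) (real ?m / real ?p) \<le> x"
    proof (cases "?p = 0 \<or> ?m = 0")
      case True
      hence "?p = 0 \<and> ?m = 0" using b1 b2 r by auto
      thus ?thesis using x1 by simp
    next
      case False
      hence pm: "real ?p > 0" "real ?m > 0" by auto
      have "1 + real ?p / real ?m \<le> real d / real r"
        by (rule ratio_bound) (use pm r b1 in \<open>simp_all add: of_nat_mult[symmetric] of_nat_add[symmetric] del: of_nat_mult of_nat_add\<close>)
      moreover have "1 + real ?m / real ?p \<le> real d / real r"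
        by (rule ratio_bound) (use pm r b2 in \<open>simp_all add: add.commute of_nat_mult[symmetric] of_nat_add[symmetric] del: of_nat_mult of_nat_add\<close>)
      ultimately show ?thesis unfolding x by simp
    qed
  qed
  show ?thesis unfolding pr fc using part1 part2 by simp
qed

end
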